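(* Let $F$, $H$, $X$, $\Omega$, $Q$ and the sequences generated by the IneIREG method be as described in the context, and suppose $H$ is $\mu$-strongly monotone for some $\mu>0$. Suppose $\eta_k\equiv\eta>0$; $\lambda_k\in[\underline\lambda,\overline\lambda]$ for all $k\ge0$ with $0<\underline\lambda\le\overline\lambda<1/L$, $L:=L_F+\eta L_H$; and $\alpha_0\in[0,1]$ and $\alpha_{k+1}\le(1-\beta_k)\alpha_k$ for all $k\ge0$, where $\beta_k:=\big(\frac{1}{1-\lambda_k^2L^2}+\frac{1}{2\lambda_k\eta\mu}\big)^{-1}$. Define $p_k:=\big(\prod_{i=0}^k(1-\beta_i)\big)^{-1}$ for $k\ge0$, and for $k\ge1$ $\Lambda_k:=\sum_{j=0}^{k-1}\lambda_j\eta p_j$ and $\overline y_k:=\Lambda_k^{-1}\sum_{j=0}^{k-1}\lambda_j\eta p_jy_j$. Let $\varepsilon>0$ and $k\ge1$. If $$k\ge\Big\lceil\Big(\frac{1}{1-\overline\lambda^2L^2}+\frac{1}{2\underline\lambda\eta\mu}\Big)\log\Big(\frac{(k+1)D_X^2}{\underline\lambda\eta\varepsilon}\Big)\Big\rceil,$$ then $-B_H\,\mathrm{dist}(\overline y_k,Q)\le\mathrm{Gap}(\overline y_k,H,Q)\le\varepsilon$.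
   Context: Work in $\mathbb{R}^n$ with Euclidean inner product $\langle\cdot,\cdot\rangle$ and norm $\|\cdot\|$; $\log$ is the natural logarithm. The maps $F\colon \mathrm{Dom}\,F\to\mathbb{R}^n$ and $H\colon\mathrm{Dom}\,H\to\mathbb{R}^n$ are monotone and Lipschitz continuous with constants $L_F>0$ and $L_H>0$; $H$ is $\mu$-strongly monotone means $\langle H(x)-H(y),x-y\rangle\ge\mu\|x-y\|^2$ for all $x,y\in\mathrm{Dom}\,H$. $X$ is a nonempty compact convex set and $\Omega$ a nonempty closed convex set with $X\subset\Omega\subset\mathrm{Dom}\,F\cap\mathrm{Dom}\,H$; $P_X,P_\Omega$ denote orthogonal projections. $Q:=\{x\in X:\langle F(x),y-x\rangle\ge0\ \forall y\in X\}$ is assumed nonempty. $D_X:=\sup_{x,y\in X}\|x-y\|$, $B_H:=\sup_{x\in Q}\|H(x)\|$, $\mathrm{dist}(y,Q)$ is the Euclidean distance to $Q$. $\mathrm{Gap}(z,H,Q):=\sup_{x\in Q}\langle H(x),z-x\rangle$. IneIREG method: start with $x_0=x_{-1}\in X$; for $k=0,1,\dots$, with parameters $\alpha_k\ge0$, $\lambda_k>0$, $\eta_k>0$, set $w_k=x_k+\alpha_k(x_k-x_{k-1})$, $w'_k=P_\Omega(w_k)$, $y_k=P_X\big(w_k-\lambda_k(F(w'_k)+\eta_kH(w'_k))\big)$, $x_{k+1}=P_X\big(w_k-\lambda_k(F(y_k)+\eta_kH(y_k))\big)$. *)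

theory Defs
  imports "HOL-Analysis.Analysis"
begin

definition VI_sol :: "('a::real_inner \<Rightarrow> 'a) \<Rightarrow> 'a set \<Rightarrow> 'a set" where
  "VI_sol F X = {x \<in> X. \<forall>y\<in>X. inner (F x) (y - x) \<ge> 0}"

definition Gap :: "'a::real_inner \<Rightarrow> ('a \<Rightarrow> 'a) \<Rightarrow> 'a set \<Rightarrow> real" where
  "Gap z H Q = (SUP x\<in>Q. inner (H x) (z - x))"

definition monotone_on_set :: "('a::real_inner \<Rightarrow> 'a) \<Rightarrow> 'a set \<Rightarrow> bool" where
  "monotone_on_set F D \<longleftrightarrow> (\<forall>x\<in>D. \<forall>y\<in>D. inner (F x - F y) (x - y) \<ge> 0)"

definition strongly_monotone_on_set :: "real \<Rightarrow> ('a::real_inner \<Rightarrow> 'a) \<Rightarrow> 'a set \<Rightarrow> bool" where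
  "strongly_monotone_on_set \<mu> F D \<longleftrightarrow>
     (\<forall>x\<in>D. \<forall>y\<in>D. inner (F x - F y) (x - y) \<ge> \<mu> * (norm (x - y))\<^sup>2)"

definition lipschitz_on_set :: "real \<Rightarrow> ('a::real_normed_vector \<Rightarrow> 'a) \<Rightarrow> 'a set \<Rightarrow> bool" where
  "lipschitz_on_set L F D \<longleftrightarrow> (\<forall>x\<in>D. \<forall>y\<in>D. norm (F x - F y) \<le> L * norm (x - y))"

end

theory Submission
  imports Defs
begin

lemma eg_step:
  fixes u z :: "'a::euclidean_space" and G :: "'a \<Rightarrow> 'a"
  assumes X: "closed X" "convex X" "X \<noteq> {}" and Om: "closed \<Omega>" "convex \<Omega>" "\<Omega> \<noteq> {}"
    and XO: "X \<subseteq> \<Omega>"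
    and Glip: "\<And>a b. a \<in> \<Omega> \<Longrightarrow> b \<in> \<Omega> \<Longrightarrow> norm (G a - G b) \<le> L * norm (a - b)"
    and L: "L \<ge> 0" and lam: "lam > 0" and z: "z \<in> X"
    and v: "v = closest_point \<Omega> u"
    and y: "y = closest_point X (u - lam *\<^sub>R G v)"
    and xp: "xp = closest_point X (u - lam *\<^sub>R G y)"
  shows "(norm (xp - z))\<^sup>2 \<le> (norm (u - z))\<^sup>2 - (1 - lam\<^sup>2 * L\<^sup>2) * (norm (u - y))\<^sup>2
           - 2 * lam * inner (G y) (y - z)"
proof -
  have yX: "y \<in> X" using y X closest_point_in_set by blast
  have xpX: "xp \<in> X" using xp X closest_point_in_set by blast
  have vO: "v \<in> \<Omega>" using v Om closest_point_in_set by blast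
  have P1: "inner (u - lam *\<^sub>R G y - xp) (z - xp) \<le> 0"
    using closest_point_dot[OF X(2) X(1) z] xp by simp
  have P2: "inner (u - lam *\<^sub>R G v - y) (xp - y) \<le> 0"
    using closest_point_dot[OF X(2) X(1) xpX] y by simp
  have P3: "norm (v - y) \<le> norm (u - y)"
  proof -
    have "closest_point \<Omega> y = y" using yX XO closest_point_self by blast
    then show ?thesis using closest_point_lipschitz[OF Om(2) Om(1) Om(3), of u y] v
      by (simp add: dist_norm)
  qed
  have P4: "norm (G v - G y) \<le> L * norm (v - y)" using Glip vO yX XO by blast
  have A: "(norm (xp - z))\<^sup>2 = (norm (u - z))\<^sup>2 - (norm (u - xp))\<^sup>2 + 2 * inner (u - xp) (z - xp)"
    by (simp add: power2_norm_eq_inner inner_diff inner_commute algebra_simps)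
  have A1: "inner (u - xp) (z - xp) \<le> lam * inner (G y) (z - xp)"
    using P1 by (simp add: inner_diff_left)
  have B: "(norm (u - xp))\<^sup>2 = (norm (u - y))\<^sup>2 + (norm (y - xp))\<^sup>2 - 2 * inner (u - y) (xp - y)"
    by (simp add: power2_norm_eq_inner inner_diff inner_commute algebra_simps)
  have B1: "inner (u - y) (xp - y) \<le> lam * inner (G v) (xp - y)"
    using P2 by (simp add: inner_diff_left)
  have E: "lam * inner (G v) (xp - y) + lam * inner (G y) (z - xp)
      = lam * inner (G v - G y) (xp - y) + lam * inner (G y) (z - y)"
    by (simp add: inner_diff inner_commute algebra_simps)
  have C0: "inner (G v - G y) (xp - y) \<le> L * norm (u - y) * norm (xp - y)"
  proof -
    have "inner (G v - G y) (xp - y) \<le> norm (G v - G y) * norm (xp - y)"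
      by (rule norm_cauchy_schwarz)
    also have "\<dots> \<le> L * norm (v - y) * norm (xp - y)"
      using P4 by (simp add: mult_right_mono)
    also have "\<dots> \<le> L * norm (u - y) * norm (xp - y)"
      using P3 L by (simp add: mult_left_mono mult_right_mono)
    finally show ?thesis .
  qed
  have C1: "2 * lam * (L * norm (u - y) * norm (xp - y)) \<le> lam\<^sup>2 * L\<^sup>2 * (norm (u - y))\<^sup>2 + (norm (xp - y))\<^sup>2"
  proof -
    have "0 \<le> (lam * L * norm (u - y) - norm (xp - y))\<^sup>2" by simp
    then show ?thesis by (simp add: power2_eq_square algebra_simps)
  qed
  have nyx: "norm (y - xp) = norm (xp - y)" by (rule norm_minus_commute)
  have "lam * inner (G v - G y) (xp - y) \<le> lam * (L * norm (u - y) * norm (xp - y))"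
    using C0 lam by (simp add: mult_left_mono)
  then have inner_yz: "inner (G y) (y - z) = - inner (G y) (z - y)"
    by (simp add: inner_diff)
  show ?thesis
    using A A1 B B1 E C0 C1 nyx lam inner_yz
      mult_left_mono[OF C0, of lam]
    by (simp add: algebra_simps) 
qed


lemma inertia_id:
  fixes p q :: "'a::real_inner"
  shows "(norm ((1 + a) *\<^sub>R p - a *\<^sub>R q))\<^sup>2
    = (1 + a) * (norm p)\<^sup>2 - a * (norm q)\<^sup>2 + a * (1 + a) * (norm (p - q))\<^sup>2"
  unfolding power2_norm_eq_inner by (simp add: inner_diff inner_add inner_commute algebra_simps)

lemma beta_ineq:
  fixes a b s t n :: real
  assumes "a > 0" "b > 0" "s \<ge> 0" "t \<ge> 0" "n \<ge> 0" "n \<le> s + t"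
  shows "1 / (1 / a + 1 / b) * n\<^sup>2 \<le> a * s\<^sup>2 + b * t\<^sup>2"
proof -
  have e: "1 / (1 / a + 1 / b) = a * b / (a + b)" using assms by (simp add: field_simps)
  have "n\<^sup>2 \<le> (s + t)\<^sup>2" using assms by (simp add: power_mono)
  moreover have "a * b * (s + t)\<^sup>2 \<le> (a + b) * (a * s\<^sup>2 + b * t\<^sup>2)"
  proof -
    have "0 \<le> (a * s - b * t)\<^sup>2" by simp
    then show ?thesis by (simp add: power2_eq_square algebra_simps)
  qed
  ultimately have "a * b * n\<^sup>2 \<le> (a + b) * (a * s\<^sup>2 + b * t\<^sup>2)"
    using assms by (smt (verit) mult_left_mono mult_pos_pos)
  then show ?thesis unfolding e using assms by (simp add: field_simps)
qed

theorem corollary4p16: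
  fixes F H :: "'a::euclidean_space \<Rightarrow> 'a"
    and DomF DomH X \<Omega> :: "'a set"
    and LF LH \<mu> \<eta> lam_lo lam_hi \<epsilon> :: real
    and alpha lam :: "nat \<Rightarrow> real"
    and x w w' y :: "nat \<Rightarrow> 'a"
    and k :: nat
  assumes F_mono: "monotone_on_set F DomF"
    and F_lip: "lipschitz_on_set LF F DomF" and LF_pos: "LF > 0"
    and H_mono: "monotone_on_set H DomH"
    and H_lip: "lipschitz_on_set LH H DomH" and LH_pos: "LH > 0"
    and H_strong: "strongly_monotone_on_set \<mu> H DomH" and mu_pos: "\<mu> > 0"
    and X_ne: "X \<noteq> {}" and X_compact: "compact X" and X_convex: "convex X"
    and \<Omega>_ne: "\<Omega> \<noteq> {}" and \<Omega>_closed: "closed \<Omega>" and \<Omega>_convex: "convex \<Omega>"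
    and X_sub: "X \<subseteq> \<Omega>" and \<Omega>_sub: "\<Omega> \<subseteq> DomF \<inter> DomH"
    and Q_ne: "VI_sol F X \<noteq> {}"
    and eta_pos: "\<eta> > 0"
    and lam_lo_pos: "0 < lam_lo" and lam_lo_le: "lam_lo \<le> lam_hi"
    and lam_hi_bd: "lam_hi < 1 / (LF + \<eta> * LH)"
    and lam_range: "\<And>j. lam_lo \<le> lam j \<and> lam j \<le> lam_hi"
    and alpha_nonneg: "\<And>j. alpha j \<ge> 0"
    and alpha0: "alpha 0 \<le> 1"
    and alpha_dec: "\<And>j. alpha (Suc j) \<le>
        (1 - 1 / (1 / (1 - (lam j)\<^sup>2 * (LF + \<eta> * LH)\<^sup>2) + 1 / (2 * lam j * \<eta> * \<mu>))) * alpha j"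
    and x0: "x 0 \<in> X"
    and w_def: "\<And>j. w j = x j + alpha j *\<^sub>R (x j - (if j = 0 then x 0 else x (j - 1)))"
    and w'_def: "\<And>j. w' j = closest_point \<Omega> (w j)"
    and y_def: "\<And>j. y j = closest_point X (w j - lam j *\<^sub>R (F (w' j) + \<eta> *\<^sub>R H (w' j)))"
    and x_def: "\<And>j. x (Suc j) = closest_point X (w j - lam j *\<^sub>R (F (y j) + \<eta> *\<^sub>R H (y j)))"
    and eps_pos: "\<epsilon> > 0"
    and k_pos: "k \<ge> 1"
    and k_large: "int k \<ge> \<lceil>(1 / (1 - lam_hi\<^sup>2 * (LF + \<eta> * LH)\<^sup>2) + 1 / (2 * lam_lo * \<eta> * \<mu>))
        * ln ((real k + 1) * (diameter X)\<^sup>2 / (lam_lo * \<eta> * \<epsilon>))\<rceil>"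
  shows "let L = LF + \<eta> * LH;
             beta = (\<lambda>i. 1 / (1 / (1 - (lam i)\<^sup>2 * L\<^sup>2) + 1 / (2 * lam i * \<eta> * \<mu>)));
             p = (\<lambda>j. 1 / (\<Prod>i\<le>j. 1 - beta i));
             Lam = (\<Sum>j<k. lam j * \<eta> * p j);
             ybar = (1 / Lam) *\<^sub>R (\<Sum>j<k. (lam j * \<eta> * p j) *\<^sub>R y j);
             Q = VI_sol F X;
             BH = (SUP q\<in>Q. norm (H q))
         in - BH * infdist ybar Q \<le> Gap ybar H Q \<and> Gap ybar H Q \<le> \<epsilon>"
proof -
  define L where "L = LF + \<eta> * LH"
  define beta where "beta = (\<lambda>i. 1 / (1 / (1 - (lam i)\<^sup>2 * L\<^sup>2) + 1 / (2 * lam i * \<eta> * \<mu>)))"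
  define p where "p = (\<lambda>j. 1 / (\<Prod>i\<le>j. 1 - beta i))"
  define Lam where "Lam = (\<Sum>j<k. lam j * \<eta> * p j)"
  define ybar where "ybar = (1 / Lam) *\<^sub>R (\<Sum>j<k. (lam j * \<eta> * p j) *\<^sub>R y j)"
  define Q where "Q = VI_sol F X"
  define BH where "BH = (SUP q\<in>Q. norm (H q))"
  define D where "D = diameter X"
  define C where "C = 1 / (1 - lam_hi\<^sup>2 * (LF + \<eta> * LH)\<^sup>2) + 1 / (2 * lam_lo * \<eta> * \<mu>)"
  define q where "q = (\<lambda>m. 1 / (\<Prod>i<m. 1 - beta i))"
  define r where "r = (\<lambda>m. q m * alpha m)"
  define prev where "prev = (\<lambda>m. if m = 0 then x 0 else x (m - 1))"
  have Lpos: "L > 0" unfolding L_def using LF_pos LH_pos eta_pos by (simp add: add_pos_pos)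
  have lamhi_pos: "lam_hi > 0" using lam_lo_pos lam_lo_le by linarith
  have lamhiL: "lam_hi * L < 1" using lam_hi_bd Lpos unfolding L_def[symmetric]
    by (simp add: pos_less_divide_eq)
  have lamhiL2: "lam_hi\<^sup>2 * L\<^sup>2 < 1"
  proof -
    have "(lam_hi * L)\<^sup>2 < 1\<^sup>2" using lamhiL lamhi_pos Lpos
      by (intro power_strict_mono) auto
    then show ?thesis by (simp add: power_mult_distrib)
  qed
  have a0: "0 < 1 - lam_hi\<^sup>2 * L\<^sup>2" using lamhiL2 by simp
  have lampos: "\<And>i. lam i > 0" using lam_range lam_lo_pos by (meson less_le_trans)
  have ai_ge: "\<And>i. 1 - lam_hi\<^sup>2 * L\<^sup>2 \<le> 1 - (lam i)\<^sup>2 * L\<^sup>2"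
  proof -
    fix i
    have "(lam i)\<^sup>2 \<le> lam_hi\<^sup>2" using lam_range[of i] lampos[of i] by (intro power_mono) auto
    then show "1 - lam_hi\<^sup>2 * L\<^sup>2 \<le> 1 - (lam i)\<^sup>2 * L\<^sup>2" by (simp add: mult_right_mono)
  qed
  have ai_pos: "\<And>i. 0 < 1 - (lam i)\<^sup>2 * L\<^sup>2" using ai_ge a0 by (meson less_le_trans)
  have ai_le1: "\<And>i. 1 - (lam i)\<^sup>2 * L\<^sup>2 \<le> 1" by simp
  have bi_pos: "\<And>i. 0 < 2 * lam i * \<eta> * \<mu>" using lampos eta_pos mu_pos by simp
  have bi_ge: "\<And>i. 2 * lam_lo * \<eta> * \<mu> \<le> 2 * lam i * \<eta> * \<mu>"
    using lam_range eta_pos mu_pos by simp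
  have inv_beta: "\<And>i. 1 / beta i = 1 / (1 - (lam i)\<^sup>2 * L\<^sup>2) + 1 / (2 * lam i * \<eta> * \<mu>)"
    unfolding beta_def by simp
  have inv_beta_pos: "\<And>i. 0 < 1 / (1 - (lam i)\<^sup>2 * L\<^sup>2) + 1 / (2 * lam i * \<eta> * \<mu>)"
    using ai_pos bi_pos by (simp add: add_pos_pos)
  have beta_pos: "\<And>i. 0 < beta i" unfolding beta_def using inv_beta_pos by simp
  have beta_lt1: "\<And>i. beta i < 1"
  proof -
    fix i
    have "1 \<le> 1 / (1 - (lam i)\<^sup>2 * L\<^sup>2)" using ai_pos[of i] ai_le1[of i] by simp
    moreover have "0 < 1 / (2 * lam i * \<eta> * \<mu>)" using bi_pos[of i] by simp
    ultimately have "1 < 1 / beta i" using inv_beta[of i] by linarith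
    then show "beta i < 1" using beta_pos[of i] by (simp add: less_divide_eq)
  qed
  have C_pos: "C > 0" unfolding C_def using a0 lam_lo_pos eta_pos mu_pos unfolding L_def
    by (simp add: add_pos_pos)
  have beta_ge: "\<And>i. 1 / C \<le> beta i"
  proof -
    fix i
    have "1 / (1 - (lam i)\<^sup>2 * L\<^sup>2) \<le> 1 / (1 - lam_hi\<^sup>2 * L\<^sup>2)"
      using ai_ge[of i] a0 by (simp add: frac_le)
    moreover have "1 / (2 * lam i * \<eta> * \<mu>) \<le> 1 / (2 * lam_lo * \<eta> * \<mu>)"
      using bi_ge[of i] lam_lo_pos eta_pos mu_pos by (simp add: frac_le)
    ultimately have "1 / beta i \<le> C" unfolding inv_beta C_def L_def by linarith
    then show "1 / C \<le> beta i" using beta_pos[of i] C_pos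
      by (simp add: divide_le_eq field_simps)
  qed
  have prod_pos: "\<And>m. 0 < (\<Prod>i<m. 1 - beta i)"
    using beta_lt1 by (intro prod_pos) (simp add: less_le_not_le)
  have prod_le1: "\<And>m. (\<Prod>i<m. 1 - beta i) \<le> 1"
    using beta_lt1 beta_pos by (intro prod_le_1) (auto simp: less_imp_le)
  have q_pos: "\<And>m. q m > 0" unfolding q_def using prod_pos by simp
  have q_ge1: "\<And>m. q m \<ge> 1" unfolding q_def using prod_pos prod_le1 by simp
  have q_Suc: "\<And>m. q (Suc m) * (1 - beta m) = q m"
  proof -
    fix m
    have "1 - beta m > 0" using beta_lt1[of m] by simp
    moreover have "(\<Prod>i<Suc m. 1 - beta i) = (\<Prod>i<m. 1 - beta i) * (1 - beta m)" by simp
    ultimately show "q (Suc m) * (1 - beta m) = q m" unfolding q_def using prod_pos[of m]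
      by simp
  qed
  have p_q: "\<And>j. p j = q (Suc j)" unfolding p_def q_def by (simp add: lessThan_Suc_atMost)
  have alpha_dec': "\<And>j. alpha (Suc j) \<le> (1 - beta j) * alpha j"
    using alpha_dec unfolding beta_def L_def by simp
  have r_dec: "\<And>m. r (Suc m) \<le> r m"
  proof -
    fix m
    have "r (Suc m) \<le> q (Suc m) * ((1 - beta m) * alpha m)"
      unfolding r_def using alpha_dec'[of m] q_pos[of "Suc m"] by (simp add: mult_left_mono)
    also have "\<dots> = (q (Suc m) * (1 - beta m)) * alpha m" by (simp only: mult.assoc)
    also have "\<dots> = r m" unfolding r_def using q_Suc[of m] by simp
    finally show "r (Suc m) \<le> r m" .
  qed
  have r0: "r 0 = alpha 0" unfolding r_def q_def by simp
  have r_le1: "\<And>m. r m \<le> 1"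
  proof -
    fix m show "r m \<le> 1"
      by (induction m) (use r0 alpha0 r_dec in \<open>auto intro: order_trans\<close>)
  qed
  have r_nonneg: "\<And>m. r m \<ge> 0" unfolding r_def using q_pos alpha_nonneg by (simp add: less_imp_le)
  have alpha_le1: "\<And>m. alpha m \<le> 1"
  proof -
    fix m
    have "alpha m \<le> q m * alpha m" using q_ge1[of m] alpha_nonneg[of m]
      by (simp add: mult_le_cancel_right1)
    then show "alpha m \<le> 1" using r_le1[of m] unfolding r_def by linarith
  qed
  have X_closed: "closed X" using X_compact by (simp add: compact_imp_closed)
  have X_bdd: "bounded X" using X_compact by (simp add: compact_imp_bounded)
  have xX: "\<And>m. x m \<in> X"
  proof -
    fix m show "x m \<in> X"
      by (cases m) (use x0 x_def closest_point_in_set[OF X_closed X_ne] in auto)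
  qed
  have yX: "\<And>m. y m \<in> X" using y_def closest_point_in_set[OF X_closed X_ne] by simp
  have prevX: "\<And>m. prev m \<in> X" unfolding prev_def using xX by simp
  have Dbd: "\<And>a b. a \<in> X \<Longrightarrow> b \<in> X \<Longrightarrow> norm (a - b) \<le> D"
    unfolding D_def using diameter_bounded_bound[OF X_bdd] by (simp add: dist_norm)
  have Dbd2: "\<And>a b. a \<in> X \<Longrightarrow> b \<in> X \<Longrightarrow> (norm (a - b))\<^sup>2 \<le> D\<^sup>2"
    using Dbd by (simp add: power_mono)
  have QX: "Q \<subseteq> X" unfolding Q_def VI_sol_def by auto
  have Q_ne': "Q \<noteq> {}" using Q_ne unfolding Q_def .
  have Gap_eq: "\<And>z. z \<in> Q \<Longrightarrow> 2 * lam m * \<eta> * inner (H z) (y m - z)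
      \<le> (1 - beta m) * (norm (w m - z))\<^sup>2 - (norm (x (Suc m) - z))\<^sup>2" for m
  proof -
    fix z assume zQ: "z \<in> Q"
    have zX: "z \<in> X" using zQ QX by auto
    have zVI: "inner (F z) (y m - z) \<ge> 0" using zQ yX unfolding Q_def VI_sol_def by auto
    let ?G = "\<lambda>a. F a + \<eta> *\<^sub>R H a"
    have Glip: "\<And>a b. a \<in> \<Omega> \<Longrightarrow> b \<in> \<Omega> \<Longrightarrow> norm (?G a - ?G b) \<le> L * norm (a - b)"
    proof -
      fix a b assume ab: "a \<in> \<Omega>" "b \<in> \<Omega>"
      have "norm (?G a - ?G b) = norm ((F a - F b) + \<eta> *\<^sub>R (H a - H b))"
        by (simp add: algebra_simps)
      also have "\<dots> \<le> norm (F a - F b) + \<eta> * norm (H a - H b)"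
        using eta_pos norm_triangle_ineq[of "F a - F b" "\<eta> *\<^sub>R (H a - H b)"] by simp
      also have "\<dots> \<le> LF * norm (a - b) + \<eta> * (LH * norm (a - b))"
        using F_lip H_lip ab \<Omega>_sub eta_pos unfolding lipschitz_on_set_def
        by (intro add_mono mult_left_mono) (simp_all add: subset_iff)
      finally show "norm (?G a - ?G b) \<le> L * norm (a - b)" unfolding L_def by (simp add: algebra_simps)
    qed
    have eg: "(norm (x (Suc m) - z))\<^sup>2 \<le> (norm (w m - z))\<^sup>2 - (1 - (lam m)\<^sup>2 * L\<^sup>2) * (norm (w m - y m))\<^sup>2
           - 2 * lam m * inner (?G (y m)) (y m - z)"
      by (rule eg_step[OF X_closed X_convex X_ne \<Omega>_closed \<Omega>_convex \<Omega>_ne X_sub Glip _ lampos zX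
            w'_def y_def x_def]) (use Lpos in auto)
    have ymD: "y m \<in> DomF \<inter> DomH" "z \<in> DomF \<inter> DomH" using yX zX X_sub \<Omega>_sub by auto
    have Fm: "inner (F (y m)) (y m - z) \<ge> inner (F z) (y m - z)"
      using F_mono ymD unfolding monotone_on_set_def by (auto simp: inner_diff_left)
    have Hm: "inner (H (y m)) (y m - z) \<ge> inner (H z) (y m - z) + \<mu> * (norm (y m - z))\<^sup>2"
    proof -
      have "\<mu> * (norm (y m - z))\<^sup>2 \<le> inner (H (y m) - H z) (y m - z)"
        using H_strong ymD unfolding strongly_monotone_on_set_def by blast
      then show ?thesis by (simp add: inner_diff_left)
    qed
    have Gin: "inner (?G (y m)) (y m - z) = inner (F (y m)) (y m - z) + \<eta> * inner (H (y m)) (y m - z)"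
      by (simp add: inner_add_left)
    have "2 * lam m * inner (?G (y m)) (y m - z) \<ge> 2 * lam m * \<eta> * (inner (H z) (y m - z) + \<mu> * (norm (y m - z))\<^sup>2)"
    proof -
      have "\<eta> * inner (H (y m)) (y m - z) \<ge> \<eta> * (inner (H z) (y m - z) + \<mu> * (norm (y m - z))\<^sup>2)"
        using Hm eta_pos by (simp add: mult_left_mono)
      then have "inner (?G (y m)) (y m - z) \<ge> \<eta> * (inner (H z) (y m - z) + \<mu> * (norm (y m - z))\<^sup>2)"
        using Gin Fm zVI by linarith
      then show ?thesis using lampos[of m] by (simp add: mult_left_mono mult.assoc)
    qed
    moreover have "beta m * (norm (w m - z))\<^sup>2 \<le> (1 - (lam m)\<^sup>2 * L\<^sup>2) * (norm (w m - y m))\<^sup>2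
        + (2 * lam m * \<eta> * \<mu>) * (norm (y m - z))\<^sup>2"
      unfolding beta_def
      using beta_ineq[OF ai_pos[of m] bi_pos[of m] norm_ge_zero[of "w m - y m"]
          norm_ge_zero[of "y m - z"] norm_ge_zero[of "w m - z"]]
        norm_triangle_ineq[of "w m - y m" "y m - z"] by simp
    ultimately show "2 * lam m * \<eta> * inner (H z) (y m - z)
      \<le> (1 - beta m) * (norm (w m - z))\<^sup>2 - (norm (x (Suc m) - z))\<^sup>2"
      using eg by (simp add: algebra_simps)
  qed
  define A where "A = (\<lambda>z m. (norm (x m - z))\<^sup>2)"
  define Phi where "Phi = (\<lambda>z m. q m * A z m - r m * (norm (prev m - z))\<^sup>2)"
  define c where "c = (\<lambda>j. lam j * \<eta> * p j)"
  have sum_bound: "(\<Sum>j<k. c j * inner (H z) (y j - z)) \<le> (real k + 1) * D\<^sup>2" if zQ: "z \<in> Q" for z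
  proof -
    have zX: "z \<in> X" using zQ QX by auto
    have claim: "(\<Sum>j<n. 2 * lam j * \<eta> * q (Suc j) * inner (H z) (y j - z))
        \<le> Phi z 0 - Phi z n + (r 0 - r n) * D\<^sup>2 + 2 * real n * D\<^sup>2" for n
    proof (induction n)
      case 0 then show ?case by simp
    next
      case (Suc m)
      have st: "2 * lam m * \<eta> * inner (H z) (y m - z)
        \<le> (1 - beta m) * (norm (w m - z))\<^sup>2 - (norm (x (Suc m) - z))\<^sup>2"
        using Gap_eq[OF zQ] .
      have st2: "2 * lam m * \<eta> * q (Suc m) * inner (H z) (y m - z)
        \<le> q m * (norm (w m - z))\<^sup>2 - q (Suc m) * A z (Suc m)"
      proof -
        have "q (Suc m) * (2 * lam m * \<eta> * inner (H z) (y m - z))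
          \<le> q (Suc m) * ((1 - beta m) * (norm (w m - z))\<^sup>2 - (norm (x (Suc m) - z))\<^sup>2)"
          using st q_pos[of "Suc m"] by (simp add: mult_left_mono)
        also have "\<dots> = (q (Suc m) * (1 - beta m)) * (norm (w m - z))\<^sup>2 - q (Suc m) * A z (Suc m)"
          unfolding A_def by (simp add: algebra_simps)
        also have "\<dots> = q m * (norm (w m - z))\<^sup>2 - q (Suc m) * A z (Suc m)"
          using q_Suc[of m] by simp
        finally show ?thesis by (simp add: mult_ac)
      qed
      have wz: "w m - z = (1 + alpha m) *\<^sub>R (x m - z) - alpha m *\<^sub>R (prev m - z)"
        using w_def[of m] unfolding prev_def by (simp add: algebra_simps)
      have W: "(norm (w m - z))\<^sup>2 = (1 + alpha m) * A z m - alpha m * (norm (prev m - z))\<^sup>2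
          + alpha m * (1 + alpha m) * (norm (x m - prev m))\<^sup>2"
        unfolding wz inertia_id A_def by (simp add: algebra_simps)
      have qW: "q m * (norm (w m - z))\<^sup>2 = q m * A z m + r m * A z m - r m * (norm (prev m - z))\<^sup>2
          + (r m * (1 + alpha m)) * (norm (x m - prev m))\<^sup>2"
        unfolding W r_def by (simp add: algebra_simps)
      have Am: "A z m \<le> D\<^sup>2" unfolding A_def using Dbd2 xX zX by blast
      have dm: "(norm (x m - prev m))\<^sup>2 \<le> D\<^sup>2" using Dbd2 xX prevX by blast
      have t1: "(r m - r (Suc m)) * A z m \<le> (r m - r (Suc m)) * D\<^sup>2"
        using r_dec[of m] Am by (simp add: mult_left_mono)
      have t2: "(r m * (1 + alpha m)) * (norm (x m - prev m))\<^sup>2 \<le> 2 * D\<^sup>2"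
      proof -
        have "r m * (1 + alpha m) \<le> 1 * 2"
          using r_le1[of m] alpha_le1[of m] r_nonneg[of m] alpha_nonneg[of m]
          by (intro mult_mono) auto
        moreover have "0 \<le> r m * (1 + alpha m)" using r_nonneg[of m] alpha_nonneg[of m] by simp
        ultimately show ?thesis using dm
          by (intro mult_mono) auto
      qed
      have prevS: "prev (Suc m) = x m" unfolding prev_def by simp
      have PhiS: "Phi z (Suc m) = q (Suc m) * A z (Suc m) - r (Suc m) * A z m"
        unfolding Phi_def prevS A_def by simp
      have Phim: "Phi z m = q m * A z m - r m * (norm (prev m - z))\<^sup>2"
        unfolding Phi_def by simp
      have sumS: "(\<Sum>j<Suc m. 2 * lam j * \<eta> * q (Suc j) * inner (H z) (y j - z))
        = (\<Sum>j<m. 2 * lam j * \<eta> * q (Suc j) * inner (H z) (y j - z))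
          + 2 * lam m * \<eta> * q (Suc m) * inner (H z) (y m - z)" by simp
      have e1: "(r 0 - r (Suc m)) * D\<^sup>2 = (r 0 - r m) * D\<^sup>2 + (r m - r (Suc m)) * D\<^sup>2"
        by (simp add: algebra_simps)
      have e2: "2 * real (Suc m) * D\<^sup>2 = 2 * real m * D\<^sup>2 + 2 * D\<^sup>2"
        by (simp add: algebra_simps)
      have t1': "r m * A z m - r (Suc m) * A z m \<le> (r m - r (Suc m)) * D\<^sup>2"
        using t1 by (simp add: left_diff_distrib)
      show ?case using Suc.IH st2 qW t1' t2 PhiS Phim sumS e1 e2 by linarith
    qed
    have "(\<Sum>j<k. 2 * lam j * \<eta> * q (Suc j) * inner (H z) (y j - z)) \<le> 2 * ((real k + 1) * D\<^sup>2)"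
    proof -
      have P0: "Phi z 0 \<le> D\<^sup>2"
      proof -
        have "A z 0 \<le> D\<^sup>2" unfolding A_def using Dbd2 xX zX by blast
        moreover have "Phi z 0 = (1 - alpha 0) * A z 0"
          unfolding Phi_def prev_def A_def q_def r_def by (simp add: algebra_simps)
        moreover have "(1 - alpha 0) * A z 0 \<le> A z 0"
          using alpha_nonneg[of 0] unfolding A_def
          by (simp add: algebra_simps)
        ultimately show ?thesis by linarith
      qed
      have Pk: "- Phi z k \<le> r k * D\<^sup>2"
      proof -
        have "r k * (norm (prev k - z))\<^sup>2 \<le> r k * D\<^sup>2"
          using r_nonneg[of k] Dbd2 prevX zX by (simp add: mult_left_mono)
        moreover have "0 \<le> q k * A z k" unfolding A_def using q_pos[of k] by simp
        ultimately show ?thesis unfolding Phi_def by linarith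
      qed
      have "(r 0 - r k) * D\<^sup>2 \<le> D\<^sup>2 - r k * D\<^sup>2"
        using r0 alpha0 mult_right_mono[OF alpha0, of "D\<^sup>2"] by (simp add: algebra_simps)
      moreover have "2 * ((real k + 1) * D\<^sup>2) = 2 * real k * D\<^sup>2 + 2 * D\<^sup>2"
        by (simp add: algebra_simps)
      ultimately show ?thesis using claim[of k] P0 Pk by linarith
    qed
    moreover have "(\<Sum>j<k. 2 * lam j * \<eta> * q (Suc j) * inner (H z) (y j - z))
        = 2 * (\<Sum>j<k. c j * inner (H z) (y j - z))"
      unfolding c_def p_q by (simp add: sum_distrib_left algebra_simps)
    ultimately show ?thesis by simp
  qed
  have c_nonneg: "\<And>j. 0 \<le> c j" unfolding c_def p_q using lampos eta_pos q_pos
    by (simp add: less_imp_le)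
  have Lam_c: "Lam = (\<Sum>j<k. c j)" unfolding Lam_def c_def ..
  have k1: "k - 1 < k" using k_pos by simp
  have Lam_ge: "lam_lo * \<eta> * q k \<le> Lam"
  proof -
    have "c (k - 1) \<le> Lam" unfolding Lam_c
      using c_nonneg k1 by (intro member_le_sum) auto
    moreover have "lam_lo * \<eta> * q k \<le> c (k - 1)"
      unfolding c_def p_q using k_pos lam_range[of "k - 1"] eta_pos q_pos[of k]
      by (simp add: mult_right_mono)
    ultimately show ?thesis by linarith
  qed
  have Lam_pos: "Lam > 0" using Lam_ge lam_lo_pos eta_pos q_pos[of k]
    by (smt (verit) mult_pos_pos)
  have key: "(real k + 1) * D\<^sup>2 \<le> \<epsilon> * (lam_lo * \<eta> * q k)"
  proof (cases "D = 0")
    case True then show ?thesis using eps_pos lam_lo_pos eta_pos q_pos[of k] by simp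
  next
    case False
    define R where "R = (real k + 1) * D\<^sup>2 / (lam_lo * \<eta> * \<epsilon>)"
    have R_pos: "R > 0" unfolding R_def using False lam_lo_pos eta_pos eps_pos by simp
    have kC: "C * ln R \<le> real k"
    proof -
      have "\<lceil>C * ln R\<rceil> \<le> int k" using k_large unfolding C_def R_def D_def .
      then show ?thesis by (simp add: ceiling_le_iff)
    qed
    have "ln R \<le> real k / C" using kC C_pos by (simp add: field_simps)
    then have "R \<le> exp (real k / C)" using R_pos by (metis exp_le_cancel_iff exp_ln)
    also have "exp (real k / C) \<le> q k"
    proof -
      have "(\<Prod>i<k. 1 - beta i) \<le> (\<Prod>i<k. 1 - 1 / C)"
        using beta_ge beta_lt1 by (intro prod_mono) (auto simp: less_imp_le)
      also have "\<dots> = (1 - 1 / C) ^ k" by simp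
      also have "\<dots> \<le> (exp (- (1 / C))) ^ k"
      proof (rule power_mono)
        show "1 - 1 / C \<le> exp (- (1 / C))" using exp_ge_add_one_self[of "- (1 / C)"] by simp
        show "0 \<le> 1 - 1 / C" using beta_ge[of 0] beta_lt1[of 0] by linarith
      qed
      also have "\<dots> = exp (- (real k / C))" by (simp add: exp_of_nat_mult[symmetric])
      finally have "(\<Prod>i<k. 1 - beta i) \<le> exp (- (real k / C))" .
      then have "1 / exp (- (real k / C)) \<le> 1 / (\<Prod>i<k. 1 - beta i)"
        using prod_pos[of k] by (simp add: frac_le)
      then show ?thesis unfolding q_def by (simp add: exp_minus field_simps)
    qed
    finally have "R \<le> q k" .
    then have "R * (lam_lo * \<eta> * \<epsilon>) \<le> q k * (lam_lo * \<eta> * \<epsilon>)"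
      using lam_lo_pos eta_pos eps_pos by (simp add: mult_right_mono)
    moreover have "R * (lam_lo * \<eta> * \<epsilon>) = (real k + 1) * D\<^sup>2"
      unfolding R_def using lam_lo_pos eta_pos eps_pos by simp
    ultimately show ?thesis by (simp add: mult_ac)
  qed
  have ybar_c: "ybar = (1 / Lam) *\<^sub>R (\<Sum>j<k. c j *\<^sub>R y j)" unfolding ybar_def c_def ..
  have upper: "inner (H z) (ybar - z) \<le> \<epsilon>" if zQ: "z \<in> Q" for z
  proof -
    have "inner (H z) (ybar - z) = (1 / Lam) * (\<Sum>j<k. c j * inner (H z) (y j - z))"
    proof -
      have "(\<Sum>j<k. c j * inner (H z) (y j - z)) = (\<Sum>j<k. c j * inner (H z) (y j)) - Lam * inner (H z) z"
        unfolding Lam_c by (simp add: inner_diff_right right_diff_distrib sum_subtractf sum_distrib_right)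
      moreover have "inner (H z) ybar = (1 / Lam) * (\<Sum>j<k. c j * inner (H z) (y j))"
        unfolding ybar_c by (simp add: inner_sum_right)
      ultimately show ?thesis using Lam_pos by (simp add: inner_diff_right field_simps)
    qed
    also have "\<dots> \<le> (1 / Lam) * ((real k + 1) * D\<^sup>2)"
      using sum_bound[OF zQ] Lam_pos by (intro mult_left_mono) auto
    also have "\<dots> \<le> \<epsilon>"
    proof -
      have "(real k + 1) * D\<^sup>2 \<le> \<epsilon> * Lam"
        using key Lam_ge eps_pos by (smt (verit) mult_left_mono)
      then show ?thesis using Lam_pos by (simp add: field_simps)
    qed
    finally show ?thesis .
  qed
  have bddG: "bdd_above ((\<lambda>z. inner (H z) (ybar - z)) ` Q)"
    using upper by (intro bdd_aboveI2) auto
  have Gap_up: "Gap ybar H Q \<le> \<epsilon>"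
    unfolding Gap_def using upper Q_ne' by (intro cSUP_least) auto
  have Gap_ge: "inner (H z) (ybar - z) \<le> Gap ybar H Q" if "z \<in> Q" for z
    unfolding Gap_def using bddG that by (rule cSUP_upper2) simp
  obtain z0 where z0: "z0 \<in> Q" using Q_ne' by blast
  have z0X: "z0 \<in> X" using z0 QX by auto
  have bddH: "bdd_above ((\<lambda>q. norm (H q)) ` Q)"
  proof (rule bdd_aboveI2)
    fix z assume "z \<in> Q"
    then have zX: "z \<in> X" using QX by auto
    have "norm (H z) \<le> norm (H z0) + norm (H z - H z0)" by (rule norm_triangle_sub)
    also have "norm (H z - H z0) \<le> LH * norm (z - z0)"
      using H_lip zX z0X X_sub \<Omega>_sub unfolding lipschitz_on_set_def by blast
    also have "LH * norm (z - z0) \<le> LH * D" using Dbd[OF zX z0X] LH_pos by simp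
    finally show "norm (H z) \<le> norm (H z0) + LH * D" by simp
  qed
  have HBH: "norm (H z) \<le> BH" if "z \<in> Q" for z
    unfolding BH_def using bddH that by (rule cSUP_upper2) simp
  have BH_nonneg: "0 \<le> BH" using HBH[OF z0] norm_ge_zero[of "H z0"] by linarith
  have lowz: "- BH * dist ybar z \<le> Gap ybar H Q" if zQ: "z \<in> Q" for z
  proof -
    have "- (norm (H z) * norm (ybar - z)) \<le> inner (H z) (ybar - z)"
      using norm_cauchy_schwarz[of "- H z" "ybar - z"] by simp
    moreover have "norm (H z) * norm (ybar - z) \<le> BH * norm (ybar - z)"
      using HBH[OF zQ] by (simp add: mult_right_mono)
    ultimately show ?thesis using Gap_ge[OF zQ] by (simp add: dist_norm)
  qed
  have lower: "- BH * infdist ybar Q \<le> Gap ybar H Q"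
  proof (cases "BH = 0")
    case True then show ?thesis using lowz[OF z0] by simp
  next
    case False
    then have BHp: "BH > 0" using BH_nonneg by simp
    have "- Gap ybar H Q / BH \<le> infdist ybar Q"
      unfolding infdist_def using Q_ne'
    proof (simp, intro cINF_greatest)
      show "Q \<noteq> {}" using Q_ne' .
      fix z assume "z \<in> Q"
      then show "- (Gap ybar H Q / BH) \<le> dist ybar z"
        using lowz[of z] BHp by (simp add: field_simps)
    qed
    then show ?thesis using BHp by (simp add: field_simps)
  qed
  have main: "- BH * infdist ybar Q \<le> Gap ybar H Q \<and> Gap ybar H Q \<le> \<epsilon>"
    using lower Gap_up by simp
  show ?thesis unfolding Let_def
    using main unfolding Q_def BH_def ybar_def Lam_def p_def beta_def L_def .
qed

end
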